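(* Let $N\ge6$, $\gamma>0$, $P:=\{(y',y_N)\in\mathbb{R}^N:|y'|<\gamma y_N^{1/2}\}$, and for $\mu>\tfrac{25}{72}$ let $P^\mu:=\{(y',y_N)\in\mathbb{R}^N:|y'|<\gamma y_N^{\frac12+\mu}\}$. Then $$\sup_{x\in(\mathbb{R}^N\setminus P^\mu)\cap\{x_N>k\}}V_P(x)\to0\quad\text{as }k\to\infty$$ and $$\sup_{x\in(\mathbb{R}^N\setminus B_k)\cap\{x_N\le k/2\}}V_P(x)\to0\quad\text{as }k\to\infty.$$
   Context: For a measurable $M\subset\mathbb{R}^N$ ($N\ge3$), the Newtonian potential is $V_M(x):=\alpha_N\int_M|x-y|^{2-N}\,dy\in[0,\infty]$ with $\alpha_N:=\frac{1}{N(N-2)|B_1|}$. $B_k$ is the open ball of radius $k$ centered at the origin; $y=(y',y_N)\in\mathbb{R}^{N-1}\times\mathbb{R}$. *)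

theory Defs
  imports "HOL-Analysis.Analysis"
begin

definition newton_alpha :: "'a::euclidean_space itself \<Rightarrow> real" where
  "newton_alpha _ = 1 / (real DIM('a) * (real DIM('a) - 2) *
      measure lebesgue (ball (0::'a) 1))"

definition newton_pot :: "'a::euclidean_space set \<Rightarrow> 'a \<Rightarrow> ennreal" where
  "newton_pot M x = (\<integral>\<^sup>+ y\<in>M. ennreal (newton_alpha TYPE('a) *
      norm (x - y) powr (2 - real DIM('a))) \<partial>lebesgue)"

end

theory Submission imports Defs begin
definition Bx :: "real \<Rightarrow> real \<Rightarrow> real \<Rightarrow> ((real^'m) \<times> real) set" where
 "Bx r a b = cbox (\<chi> i. -r) (\<chi> i. r) \<times> {a..b}"

lemma Bx_borel: "Bx r a b \<in> sets (lborel :: ((real^'m) \<times> real) measure)"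
  unfolding Bx_def sets_lborel by (intro borel_closed closed_Times) auto

lemma Bx_sets: "Bx r a b \<in> sets lebesgue"
  using Bx_borel by (rule sets_completionI_sets)

lemma Bx_vol:
  assumes "0 \<le> r" "a \<le> b"
  shows "emeasure lebesgue (Bx r a b :: ((real^'m) \<times> real) set) = ennreal ((2*r)^CARD('m) * (b - a))"
proof -
  have "emeasure lebesgue (Bx r a b :: ((real^'m) \<times> real) set) = emeasure lborel (Bx r a b :: ((real^'m) \<times> real) set)"
    by (subst emeasure_completion[OF Bx_sets]) (simp only: main_part[OF Bx_borel])
  also have "\<dots> = emeasure (lborel \<Otimes>\<^sub>M lborel) (Bx r a b :: ((real^'m) \<times> real) set)"
    by (simp add: lborel_prod)
  also have "\<dots> = emeasure lborel (cbox (\<chi> i. -r) (\<chi> i. r) :: (real^'m) set) * emeasure lborel {a..b}"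
    unfolding Bx_def by (rule lborel.emeasure_pair_measure_Times) auto
  also have "\<dots> = ennreal ((2*r)^CARD('m) * (b - a))"
  proof -
    have pr: "(\<Prod>i\<in>(Basis::(real^'m) set). ((\<chi> i. r) - (\<chi> i. -r)) \<bullet> i) = (2*r)^CARD('m)"
    proof -
      have "(\<Prod>i\<in>(Basis::(real^'m) set). ((\<chi> i. r) - (\<chi> i. -r)) \<bullet> i) = (\<Prod>i\<in>(Basis::(real^'m) set). 2*r)"
        by (intro prod.cong) (auto simp: Basis_vec_def inner_axis)
      also have "\<dots> = (2*r)^CARD('m)" by simp
      finally show ?thesis .
    qed
    have le: "\<forall>i\<in>(Basis::(real^'m) set). (\<chi> i. -r) \<bullet> i \<le> (\<chi> i. r) \<bullet> i"
      using assms by (auto simp: Basis_vec_def inner_axis)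
    show ?thesis using assms le
      by (simp add: emeasure_lborel_cbox_eq pr ennreal_mult')
  qed
  finally show ?thesis .
qed

lemma dim_eq: "real DIM((real^'m) \<times> real) = real CARD('m) + 1"
  by simp

lemma kern:
  fixes x y :: "(real^'m) \<times> real"
  assumes "0 < d" "d \<le> norm (x - y)"
  shows "ennreal (newton_alpha TYPE((real^'m)\<times>real) * norm (x-y) powr (2 - real DIM((real^'m)\<times>real)))
     \<le> ennreal (\<bar>newton_alpha TYPE((real^'m)\<times>real)\<bar> * d powr (- (real CARD('m) - 1)))"
proof (rule ennreal_leI)
  let ?a = "newton_alpha TYPE((real^'m)\<times>real)"
  have e: "2 - real DIM((real^'m)\<times>real) = - (real CARD('m) - 1)" by simp
  have "norm (x-y) powr (- (real CARD('m) - 1)) \<le> d powr (- (real CARD('m) - 1))"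
    using assms by (intro powr_mono2') auto
  then have "?a * norm (x-y) powr (- (real CARD('m) - 1)) \<le> \<bar>?a\<bar> * d powr (- (real CARD('m) - 1))"
    by (smt (verit, ccfv_SIG) abs_ge_self mult_left_mono mult_right_mono powr_ge_zero abs_ge_zero)
  then show "?a * norm (x-y) powr (2 - real DIM((real^'m)\<times>real)) \<le> \<bar>?a\<bar> * d powr (- (real CARD('m) - 1))"
    by (simp only: e)
qed

lemma powr_pow_half: "0 < z \<Longrightarrow> (z powr a) ^ n = z powr (a * real n)"
  by (simp add: powr_powr[symmetric] powr_realpow)

lemma pw2: "0 < z \<Longrightarrow> ((2::real)^j * z) powr c = (2 powr c)^j * z powr c"
  by (simp add: powr_mult powr_realpow[symmetric] powr_powr mult.commute)


definition Dj :: "real \<Rightarrow> real \<Rightarrow> nat \<Rightarrow> ((real^'m) \<times> real) set" where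
  "Dj g K j = Bx (g * (2^j*(2*K)) powr (1/2)) (2^j*K) (2^j*(2*K))"

definition tg :: "real \<Rightarrow> real \<Rightarrow> real \<Rightarrow> ((real^'m) \<times> real) \<Rightarrow> ennreal" where
  "tg c g K y = (\<Sum>j. ennreal (c * (2^j*(K/2)) powr (- (real CARD('m) - 1))) * indicator (Dj g K j) y)"

lemma tail_int:
  assumes "0 < K" "0 < g" "CARD('m) \<ge> 5" "0 \<le> c"
  shows "(\<integral>\<^sup>+ y. tg c g K (y::(real^'m)\<times>real) \<partial>lebesgue) =
    ennreal (c * (2*g)^CARD('m) * (K/2) powr (- (real CARD('m) - 1)) * (2*K) powr (real CARD('m)/2) * K
      / (1 - 2 powr (real CARD('m)/2 + 1 - (real CARD('m) - 1))))"
proof -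
  define n where "n = CARD('m)"
  define p where "p = real n - 1"
  define q :: real where "q = 2 powr (real n/2 + 1 - p)"
  define A where "A = c * (2*g)^n * (K/2) powr (-p) * (2*K) powr (real n/2) * K"
  have n5: "real n \<ge> 5" using assms(3) n_def by simp
  have q0: "0 < q" "q < 1" unfolding q_def p_def using n5 by (auto intro!: powr_less_one)
  have A0: "0 \<le> A" unfolding A_def using assms by auto
  have trm: "c * (2^j*(K/2)) powr (-p) * ((2 * (g * (2^j*(2*K)) powr (1/2)))^n * (2^j*(2*K) - 2^j*K)) = A * q^j" for j
  proof -
    have "(2 * (g * (2^j*(2*K)) powr (1/2)))^n = (2*g)^n * ((2^j*(2*K)) powr (1/2))^n"
      by (simp add: power_mult_distrib)
    also have "((2^j*(2*K)) powr (1/2))^n = (2^j*(2*K)) powr (real n/2)"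
      using assms by (simp add: powr_pow_half)
    also have "\<dots> = (2 powr (real n/2))^j * (2*K) powr (real n/2)"
      using assms by (simp add: pw2)
    finally have 1: "(2 * (g * (2^j*(2*K)) powr (1/2)))^n = (2*g)^n * ((2 powr (real n/2))^j * (2*K) powr (real n/2))" .
    have 2: "(2^j*(K/2)) powr (-p) = (2 powr (-p))^j * (K/2) powr (-p)"
      using assms by (intro pw2) simp
    have 3: "(2::real)^j*(2*K) - 2^j*K = 2^j * K" by simp
    have qq: "q = 2 powr (-p) * 2 powr (real n/2) * 2"
    proof -
      have "real n/2 + 1 - p = -p + real n/2 + 1" by simp
      then show ?thesis unfolding q_def by (simp only: powr_add powr_one)
    qed
    have 4: "q^j = (2 powr (-p))^j * (2 powr (real n/2))^j * 2^j"
      unfolding qq by (simp only: power_mult_distrib)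
    show ?thesis unfolding 1 2 3 4 A_def by (simp only: ac_simps)
  qed
  define F where "F = (\<lambda>j (y::(real^'m)\<times>real). ennreal (c * (2^j*(K/2)) powr (-p)) * indicator (Dj g K j :: ((real^'m)\<times>real) set) y)"
  have tgF: "tg c g K = (\<lambda>y. \<Sum>j. F j y)" unfolding tg_def F_def p_def n_def by (rule refl)
  have mF: "F j \<in> borel_measurable lebesgue" for j
    unfolding F_def Dj_def by (intro borel_measurable_times_ennreal borel_measurable_const borel_measurable_indicator Bx_sets)
  have "(\<integral>\<^sup>+ y. tg c g K (y::(real^'m)\<times>real) \<partial>lebesgue) = (\<Sum>j. integral\<^sup>N lebesgue (F j))"
    unfolding tgF by (rule nn_integral_suminf[OF mF])
  also have "\<dots> = (\<Sum>j. ennreal (A * q^j))"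
  proof (rule suminf_cong)
    fix j
    have "integral\<^sup>N lebesgue (F j) = ennreal (c * (2^j*(K/2)) powr (-p)) * emeasure lebesgue (Dj g K j :: ((real^'m)\<times>real) set)"
      unfolding F_def Dj_def by (rule nn_integral_cmult_indicator[OF Bx_sets])
    also have "emeasure lebesgue (Dj g K j :: ((real^'m)\<times>real) set) = ennreal ((2 * (g * (2^j*(2*K)) powr (1/2)))^n * (2^j*(2*K) - 2^j*K))"
      unfolding Dj_def n_def by (rule Bx_vol) (use assms in simp_all)
    also have "ennreal (c * (2^j*(K/2)) powr (-p)) * ennreal ((2 * (g * (2^j*(2*K)) powr (1/2)))^n * (2^j*(2*K) - 2^j*K))
        = ennreal (c * (2^j*(K/2)) powr (-p) * ((2 * (g * (2^j*(2*K)) powr (1/2)))^n * (2^j*(2*K) - 2^j*K)))"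
      by (rule ennreal_mult''[symmetric]) (use assms in simp)
    also have "\<dots> = ennreal (A * q^j)" by (simp only: trm)
    finally show "integral\<^sup>N lebesgue (F j) = ennreal (A * q^j)" .
  qed
  also have "\<dots> = ennreal (\<Sum>j. A * q^j)"
  proof (rule suminf_ennreal2)
    show "\<And>j. 0 \<le> A * q^j" using q0 A0 by simp
    show "summable (\<lambda>j. A * q^j)" using q0 by (intro summable_mult summable_geometric) simp
  qed
  also have "(\<Sum>j. A * q^j) = A / (1 - q)"
  proof -
    have "(\<Sum>j. A * q^j) = A * (\<Sum>j. q^j)" using q0 by (intro suminf_mult summable_geometric) simp
    also have "(\<Sum>j. q^j) = 1 / (1 - q)" using q0 by (intro suminf_geometric) simp
    finally show ?thesis by simp
  qed
  finally show ?thesis unfolding A_def q_def p_def n_def .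
qed

lemma dyadic_ex:
  assumes "(1::real) \<le> z"
  shows "\<exists>j::nat. 2^j \<le> z \<and> z \<le> 2^(j+1)"
proof -
  obtain n where n: "z < 2^n" using real_arch_pow[of 2 z] by auto
  define n0 where "n0 = (LEAST n. z < (2::real)^n)"
  have n0: "z < 2^n0" unfolding n0_def by (rule LeastI[of _ n]) (rule n)
  have "n0 \<noteq> 0"
  proof
    assume "n0 = 0" with n0 assms show False by simp
  qed
  then obtain j where j: "n0 = Suc j" by (cases n0) auto
  have "\<not> z < 2^j" using j unfolding n0_def
    by (metis Suc_n_not_le_n not_less_Least n0_def not_le)
  then show ?thesis using n0 j by (intro exI[of _ j]) auto
qed

lemma Bx_mem:
  fixes y :: "(real^'m) \<times> real"
  assumes "norm (fst y) \<le> r" "a \<le> snd y" "snd y \<le> b"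
  shows "y \<in> Bx r a b"
proof -
  have "\<forall>i. \<bar>fst y $ i\<bar> \<le> r" using assms component_le_norm_cart[of "fst y"] by (meson order_trans)
  then have "\<forall>i. -r \<le> fst y $ i \<and> fst y $ i \<le> r" by (metis abs_le_D1 abs_le_D2 minus_le_iff)
  then show ?thesis using assms unfolding Bx_def by (cases y) (auto simp: mem_box_cart)
qed

lemma tail_pt:
  fixes x y :: "(real^'m) \<times> real"
  assumes "0 < K" "0 < g" "norm (fst y) < g * snd y powr (1/2)" "K \<le> snd y" "snd y / 2 \<le> norm (x - y)"
  shows "ennreal (newton_alpha TYPE((real^'m)\<times>real) * norm (x-y) powr (2 - real DIM((real^'m)\<times>real)))
     \<le> tg \<bar>newton_alpha TYPE((real^'m)\<times>real)\<bar> g K y"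
proof -
  let ?a = "newton_alpha TYPE((real^'m)\<times>real)"
  define t where "t = snd y"
  have "1 \<le> t / K" using assms by (simp add: t_def)
  then obtain j where j: "2^j \<le> t/K" "t/K \<le> 2^(j+1)" using dyadic_ex by blast
  have j1: "2^j * K \<le> t" "t \<le> 2^j*(2*K)" using j assms by (auto simp: field_simps)
  have "y \<in> Dj g K j" unfolding Dj_def
  proof (rule Bx_mem)
    have "t powr (1/2) \<le> (2^j*(2*K)) powr (1/2)"
      using j1 assms by (intro powr_mono2) (auto simp: t_def)
    then show "norm (fst y) \<le> g * (2^j*(2*K)) powr (1/2)"
      using assms(2,3) unfolding t_def[symmetric]
      by (smt (verit) mult_left_mono)
  qed (use j1 t_def in auto)
  have "ennreal (?a * norm (x-y) powr (2 - real DIM((real^'m)\<times>real)))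
      \<le> ennreal (\<bar>?a\<bar> * (2^j*(K/2)) powr (- (real CARD('m) - 1)))"
    using j1 assms by (intro kern) (auto simp: t_def)
  also have "\<dots> = ennreal (\<bar>?a\<bar> * (2^j*(K/2)) powr (- (real CARD('m) - 1))) * indicator (Dj g K j) y"
    using \<open>y \<in> Dj g K j\<close> by simp
  also have "\<dots> \<le> tg \<bar>?a\<bar> g K y"
  proof -
    define F where "F = (\<lambda>j. ennreal (\<bar>?a\<bar> * (2^j*(K/2)) powr (- (real CARD('m) - 1))) * indicator (Dj g K j) y)"
    have "sum F {j} \<le> suminf F" by (rule sum_le_suminf) (auto intro: summableI)
    then have "F j \<le> suminf F" by simp
    then show ?thesis unfolding tg_def F_def by simp
  qed
  finally show ?thesis .
qed

lemma tg_meas: "tg c g K \<in> borel_measurable (lebesgue :: ((real^'m) \<times> real) measure)"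
  unfolding tg_def Dj_def by (intro borel_measurable_suminf_order borel_measurable_times_ennreal borel_measurable_indicator Bx_sets) auto

lemma box_int:
  assumes "0 \<le> r" "a \<le> b" "0 \<le> c"
  shows "(\<integral>\<^sup>+ y. ennreal c * indicator (Bx r a b :: ((real^'m) \<times> real) set) y \<partial>lebesgue)
     = ennreal (c * ((2*r)^CARD('m) * (b - a)))"
  using assms by (simp add: nn_integral_cmult_indicator[OF Bx_sets] Bx_vol ennreal_mult'')

lemma nfst: "norm (fst z) \<le> norm z" by (cases z) (simp add: norm_fst_le)
lemma nsnd: "\<bar>snd z\<bar> \<le> norm (z :: 'a::real_normed_vector \<times> real)"
  using norm_snd_le[of "snd z" "fst z"] by (cases z) simp


lemma ring_re: "(c::real)*G*(Kp*P2)*(N2*Kn)*K/Q = (c*G*P2*N2/Q)*(Kp*Kn*K)"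
  by (simp add: divide_inverse mult_ac)

lemma TB_eq:
  assumes "0 < K"
  shows "c * (2*g)^n * (K/2) powr (-p) * (2*K) powr (real n/2) * K / (1 - q)
     = (c * (2*g)^n * 2 powr p * 2 powr (real n/2) / (1 - q)) * K powr (real n/2 + 1 - p)"
proof -
  have h1: "(K/2) powr (-p) = K powr (-p) * 2 powr p"
  proof -
    have "(K/2) powr (-p) = K powr (-p) / 2 powr (-p)" using assms by (intro powr_divide)
    also have "2 powr (-p) = inverse (2 powr p)" by (rule powr_minus)
    finally show ?thesis by (simp only: divide_inverse inverse_inverse_eq)
  qed
  have h2: "(2*K) powr (real n/2) = 2 powr (real n/2) * K powr (real n/2)" using assms by (simp add: powr_mult)
  have h3: "K powr (real n/2 + 1 - p) = K powr (-p) * K powr (real n/2) * K"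
  proof -
    have "real n/2 + 1 - p = -p + real n/2 + 1" by simp
    then show ?thesis using assms by (simp only: powr_add powr_one)
  qed
  show ?thesis unfolding h1 h2 h3 by (rule ring_re)
qed
lemma part2:
  fixes x :: "(real^'m) \<times> real"
  assumes "0 < g" "16*g^2 \<le> k" "0 < k" "k \<le> norm x" "snd x \<le> k/2" "CARD('m) \<ge> 5"
  shows "newton_pot {y :: (real^'m) \<times> real. snd y > 0 \<and> norm (fst y) < g * snd y powr (1/2)} x
    \<le> ennreal (\<bar>newton_alpha TYPE((real^'m)\<times>real)\<bar> * (k/4) powr (- (real CARD('m) - 1))
          * ((2*(g * k powr (1/2)))^CARD('m) * (k - 0)))
      + ennreal (\<bar>newton_alpha TYPE((real^'m)\<times>real)\<bar> * (2*g)^CARD('m) * (k/2) powr (- (real CARD('m) - 1)) * (2*k) powr (real CARD('m)/2) * k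
      / (1 - 2 powr (real CARD('m)/2 + 1 - (real CARD('m) - 1))))"
proof -
  let ?a = "newton_alpha TYPE((real^'m)\<times>real)"
  let ?c = "\<bar>?a\<bar>"
  let ?P = "{y :: (real^'m) \<times> real. snd y > 0 \<and> norm (fst y) < g * snd y powr (1/2)}"
  let ?r = "g * k powr (1/2)"
  define G1 where "G1 = (\<lambda>y::(real^'m)\<times>real. ennreal (?c * (k/4) powr (- (real CARD('m) - 1))) * indicator (Bx ?r 0 k) y)"
  have rk: "?r \<le> k/4"
  proof -
    have "4*g \<le> sqrt k" using assms(2) by (intro real_le_rsqrt) (simp add: power_mult_distrib)
    then have "4*g * sqrt k \<le> sqrt k * sqrt k" using assms(3) by (intro mult_right_mono) auto
    then have "g * sqrt k \<le> k/4" using assms(3) by simp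
    then show ?thesis using assms(3) by (simp add: powr_half_sqrt)
  qed
  have pt: "ennreal (?a * norm (x-y) powr (2 - real DIM((real^'m)\<times>real))) * indicator ?P y \<le> G1 y + tg ?c g k y" for y
  proof (cases "y \<in> ?P")
    case False then show ?thesis by simp
  next
    case True
    then have t0: "snd y > 0" and ny: "norm (fst y) < g * snd y powr (1/2)" by auto
    have n1: "norm (fst x - fst y) \<le> norm (x - y)" using nfst[of "x-y"] by simp
    have n2: "\<bar>snd x - snd y\<bar> \<le> norm (x - y)" using nsnd[of "x-y"] by simp
    show ?thesis
    proof (cases "snd y \<le> k")
      case True
      have "snd y powr (1/2) \<le> k powr (1/2)" using True t0 by (intro powr_mono2) auto
      then have nyr: "norm (fst y) \<le> ?r" using ny assms(1) by (smt (verit) mult_left_mono)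
      have far: "k/4 \<le> norm (x - y)"
      proof (cases "norm (fst x) \<ge> k/2")
        case True
        have "norm (fst x) - norm (fst y) \<le> norm (fst x - fst y)" by (rule norm_triangle_ineq2)
        then show ?thesis using True nyr rk n1 by linarith
      next
        case False
        have "k^2 \<le> (norm x)^2" using assms(3,4) by (simp add: power_mono)
        also have "(norm x)^2 = (norm (fst x))^2 + (snd x)^2" by (cases x) (simp add: norm_Pair)
        finally have "k^2 \<le> (norm (fst x))^2 + (snd x)^2" .
        moreover have "(norm (fst x))^2 \<le> (k/2)^2" using False by (intro power_mono) auto
        moreover have "(k/2)^2 = k^2/4" by (simp add: power_divide)
        moreover have "0 < k^2" using assms(3) by simp
        ultimately have "(k/2)^2 < (snd x)^2" by linarith
        then have "k/2 < \<bar>snd x\<bar>" using power_less_imp_less_base[of "k/2" 2 "\<bar>snd x\<bar>"] by simp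
        then have "snd x < - (k/2)" using assms(5) by linarith
        then show ?thesis using n2 t0 assms(3) by linarith
      qed
      have "ennreal (?a * norm (x-y) powr (2 - real DIM((real^'m)\<times>real))) \<le> ennreal (?c * (k/4) powr (- (real CARD('m) - 1)))"
        using far assms(3) by (intro kern) auto
      also have "\<dots> = G1 y" unfolding G1_def using Bx_mem[of y ?r 0 k] nyr True t0 by simp
      also have "\<dots> \<le> G1 y + tg ?c g k y" by simp
      finally show ?thesis using \<open>y \<in> ?P\<close> by simp
    next
      case False
      have "snd y / 2 \<le> norm (x - y)" using n2 False assms(5) by linarith
      then have "ennreal (?a * norm (x-y) powr (2 - real DIM((real^'m)\<times>real))) \<le> tg ?c g k y"
        using False ny assms by (intro tail_pt) auto
      also have "\<dots> \<le> G1 y + tg ?c g k y" by simp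
      finally show ?thesis using \<open>y \<in> ?P\<close> by simp
    qed
  qed
  have le: "newton_pot ?P x \<le> (\<integral>\<^sup>+ y. G1 y + tg ?c g k y \<partial>lebesgue)"
    unfolding newton_pot_def by (rule nn_integral_mono) (rule pt)
  have m1: "G1 \<in> borel_measurable lebesgue" unfolding G1_def
    by (intro borel_measurable_times_ennreal borel_measurable_const borel_measurable_indicator Bx_sets)
  have m2: "tg ?c g k \<in> borel_measurable (lebesgue :: ((real^'m) \<times> real) measure)" by (rule tg_meas)
  have add: "(\<integral>\<^sup>+ y. G1 y + tg ?c g k y \<partial>lebesgue) = (\<integral>\<^sup>+ y. G1 y \<partial>lebesgue) + (\<integral>\<^sup>+ y. tg ?c g k (y::(real^'m)\<times>real) \<partial>lebesgue)"
    by (rule nn_integral_add[OF m1 m2])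
  have I1: "(\<integral>\<^sup>+ y. G1 y \<partial>lebesgue) = ennreal (?c * (k/4) powr (- (real CARD('m) - 1)) * ((2*?r)^CARD('m) * (k - 0)))"
    unfolding G1_def by (rule box_int) (use assms(1,3) in auto)
  have I2: "(\<integral>\<^sup>+ y. tg ?c g k (y :: (real^'m) \<times> real) \<partial>lebesgue) = ennreal (?c * (2*g)^CARD('m) * (k/2) powr (- (real CARD('m) - 1)) * (2*k) powr (real CARD('m)/2) * k
      / (1 - 2 powr (real CARD('m)/2 + 1 - (real CARD('m) - 1))))"
    by (rule tail_int) (use assms(1,3,6) in auto)
  have "newton_pot ?P x \<le> ennreal (?c * (k/4) powr (- (real CARD('m) - 1)) * ((2*?r)^CARD('m) * (k - 0))) + ennreal (?c * (2*g)^CARD('m) * (k/2) powr (- (real CARD('m) - 1)) * (2*k) powr (real CARD('m)/2) * k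
      / (1 - 2 powr (real CARD('m)/2 + 1 - (real CARD('m) - 1))))"
    using le by (simp only: add I1 I2)
  then show ?thesis .
qed

lemma part1:
  fixes x :: "(real^'m) \<times> real"
  assumes "0 < g" "CARD('m) \<ge> 5" "1 \<le> s" "snd x = s" "g * s powr a \<le> norm (fst x)"
    "s powr b \<le> s" "2 * (2 * s) powr (1/2) \<le> s powr a"
  shows "newton_pot {y :: (real^'m) \<times> real. snd y > 0 \<and> norm (fst y) < g * snd y powr (1/2)} x
    \<le> ennreal (\<bar>newton_alpha TYPE((real^'m)\<times>real)\<bar> * (s powr b) powr (- (real CARD('m) - 1))
          * ((2*(g * (2 * s) powr (1/2)))^CARD('m) * (2 * s - 0)))
      + ennreal (\<bar>newton_alpha TYPE((real^'m)\<times>real)\<bar> * (g * s powr a / 2) powr (- (real CARD('m) - 1))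
          * ((2*(g * (2 * s) powr (1/2)))^CARD('m) * ((s + s powr b) - (s - s powr b))))
      + ennreal (\<bar>newton_alpha TYPE((real^'m)\<times>real)\<bar> * (2*g)^CARD('m) * ((2 * s)/2) powr (- (real CARD('m) - 1)) * (2*(2 * s)) powr (real CARD('m)/2) * (2 * s)
      / (1 - 2 powr (real CARD('m)/2 + 1 - (real CARD('m) - 1))))"
proof -
  let ?a = "newton_alpha TYPE((real^'m)\<times>real)"
  let ?c = "\<bar>?a\<bar>"
  let ?P = "{y :: (real^'m) \<times> real. snd y > 0 \<and> norm (fst y) < g * snd y powr (1/2)}"
  let ?r = "g * (2 * s) powr (1/2)"
  have s0: "0 < s" using assms(3) by simp
  have sb0: "0 < s powr b" using s0 by simp
  have rr: "?r \<le> g * s powr a / 2"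
  proof -
    have "(2 * s) powr (1/2) \<le> s powr a / 2" using assms(7) by linarith
    then have "g * (2 * s) powr (1/2) \<le> g * (s powr a / 2)" using assms(1) by (intro mult_left_mono) auto
    then show ?thesis by simp
  qed
  define G1 where "G1 = (\<lambda>y::(real^'m)\<times>real. ennreal (?c * (s powr b) powr (- (real CARD('m) - 1))) * indicator (Bx ?r 0 (2 * s)) y)"
  define G2 where "G2 = (\<lambda>y::(real^'m)\<times>real. ennreal (?c * (g * s powr a / 2) powr (- (real CARD('m) - 1))) * indicator (Bx ?r (s - s powr b) (s + s powr b)) y)"
  have pt: "ennreal (?a * norm (x-y) powr (2 - real DIM((real^'m)\<times>real))) * indicator ?P y \<le> G1 y + G2 y + tg ?c g (2 * s) y" for y
  proof (cases "y \<in> ?P")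
    case False then show ?thesis by simp
  next
    case True
    then have t0: "snd y > 0" and ny: "norm (fst y) < g * snd y powr (1/2)" by auto
    have n1: "norm (fst x - fst y) \<le> norm (x - y)" using nfst[of "x-y"] by simp
    have n2: "\<bar>snd x - snd y\<bar> \<le> norm (x - y)" using nsnd[of "x-y"] by simp
    let ?L = "ennreal (?a * norm (x-y) powr (2 - real DIM((real^'m)\<times>real)))"
    have "?L \<le> G1 y + G2 y + tg ?c g (2 * s) y"
    proof (cases "snd y \<le> 2 * s")
      case le2: True
      have "snd y powr (1/2) \<le> (2 * s) powr (1/2)" using le2 t0 by (intro powr_mono2) auto
      then have nyr: "norm (fst y) \<le> ?r" using ny assms(1) by (smt (verit) mult_left_mono)
      show ?thesis
      proof (cases "\<bar>snd y - s\<bar> \<le> s powr b")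
        case True
        have "g * s powr a - ?r \<le> norm (fst x) - norm (fst y)" using assms(5) nyr by linarith
        also have "\<dots> \<le> norm (fst x - fst y)" by (rule norm_triangle_ineq2)
        finally have far: "g * s powr a / 2 \<le> norm (x - y)" using rr n1 by linarith
        have "?L \<le> ennreal (?c * (g * s powr a / 2) powr (- (real CARD('m) - 1)))"
          using far assms(1) s0 by (intro kern) auto
        also have "\<dots> = G2 y" unfolding G2_def using Bx_mem[of y ?r "s - s powr b" "s + s powr b"] nyr True by simp
        also have "\<dots> \<le> G1 y + G2 y + tg ?c g (2 * s) y" by (simp add: add.commute add.left_commute)
        finally show ?thesis .
      next
        case False
        have far: "s powr b \<le> norm (x - y)" using False n2 assms(4) by linarith
        have "?L \<le> ennreal (?c * (s powr b) powr (- (real CARD('m) - 1)))"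
          using far sb0 by (intro kern) auto
        also have "\<dots> = G1 y" unfolding G1_def using Bx_mem[of y ?r 0 "2 * s"] nyr le2 t0 by simp
        also have "\<dots> \<le> G1 y + G2 y + tg ?c g (2 * s) y" by simp
        finally show ?thesis .
      qed
    next
      case False
      have "snd y / 2 \<le> norm (x - y)" using n2 False assms(4) by linarith
      then have "?L \<le> tg ?c g (2 * s) y"
        using False ny assms(1) s0 by (intro tail_pt) auto
      also have "\<dots> \<le> G1 y + G2 y + tg ?c g (2 * s) y" by simp
      finally show ?thesis .
    qed
    then show ?thesis using True by simp
  qed
  have le: "newton_pot ?P x \<le> (\<integral>\<^sup>+ y. G1 y + G2 y + tg ?c g (2 * s) y \<partial>lebesgue)"
    unfolding newton_pot_def by (rule nn_integral_mono) (rule pt)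
  have m1: "G1 \<in> borel_measurable lebesgue" unfolding G1_def
    by (intro borel_measurable_times_ennreal borel_measurable_const borel_measurable_indicator Bx_sets)
  have m2: "G2 \<in> borel_measurable lebesgue" unfolding G2_def
    by (intro borel_measurable_times_ennreal borel_measurable_const borel_measurable_indicator Bx_sets)
  have m12: "(\<lambda>y. G1 y + G2 y) \<in> borel_measurable lebesgue" using m1 m2 by (rule borel_measurable_add)
  have m3: "tg ?c g (2 * s) \<in> borel_measurable (lebesgue :: ((real^'m) \<times> real) measure)" by (rule tg_meas)
  have add: "(\<integral>\<^sup>+ y. G1 y + G2 y + tg ?c g (2 * s) y \<partial>lebesgue) = (\<integral>\<^sup>+ y. G1 y \<partial>lebesgue) + (\<integral>\<^sup>+ y. G2 y \<partial>lebesgue) + (\<integral>\<^sup>+ y. tg ?c g (2 * s) (y::(real^'m)\<times>real) \<partial>lebesgue)"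
    using nn_integral_add[OF m12 m3] nn_integral_add[OF m1 m2] by simp
  have I1: "(\<integral>\<^sup>+ y. G1 y \<partial>lebesgue) = ennreal (?c * (s powr b) powr (- (real CARD('m) - 1)) * ((2*?r)^CARD('m) * (2 * s - 0)))"
    unfolding G1_def by (rule box_int) (use assms(1) s0 in auto)
  have I2: "(\<integral>\<^sup>+ y. G2 y \<partial>lebesgue) = ennreal (?c * (g * s powr a / 2) powr (- (real CARD('m) - 1)) * ((2*?r)^CARD('m) * ((s + s powr b) - (s - s powr b))))"
    unfolding G2_def by (rule box_int) (use assms(1) s0 sb0 in auto)
  have I3: "(\<integral>\<^sup>+ y. tg ?c g (2 * s) (y :: (real^'m) \<times> real) \<partial>lebesgue) = ennreal (?c * (2*g)^CARD('m) * ((2 * s)/2) powr (- (real CARD('m) - 1)) * (2*(2 * s)) powr (real CARD('m)/2) * (2 * s)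
      / (1 - 2 powr (real CARD('m)/2 + 1 - (real CARD('m) - 1))))"
    by (rule tail_int) (use assms(1,2) s0 in auto)
  have "newton_pot ?P x \<le> ennreal (?c * (s powr b) powr (- (real CARD('m) - 1)) * ((2*?r)^CARD('m) * (2 * s - 0)))
     + ennreal (?c * (g * s powr a / 2) powr (- (real CARD('m) - 1)) * ((2*?r)^CARD('m) * ((s + s powr b) - (s - s powr b))))
     + ennreal (?c * (2*g)^CARD('m) * ((2 * s)/2) powr (- (real CARD('m) - 1)) * (2*(2 * s)) powr (real CARD('m)/2) * (2 * s)
      / (1 - 2 powr (real CARD('m)/2 + 1 - (real CARD('m) - 1))))"
    using le by (simp only: add I1 I2 I3)
  then show ?thesis .
qed
lemma Qf:
  assumes "0 < (z::real)"
  shows "(2*(g*z powr (1/2)))^n = (2*g)^n * z powr (real n/2)"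
proof -
  have "(2*(g*z powr (1/2)))^n = (2*g)^n * (z powr (1/2))^n"
    by (simp only: mult.assoc[symmetric] power_mult_distrib)
  also have "(z powr (1/2))^n = z powr (1/2 * real n)" using assms by (rule powr_pow_half)
  also have "1/2 * real n = real n / 2" by simp
  finally show ?thesis .
qed

lemma F1:
  assumes "0 < (s::real)"
  shows "c * (s powr b) powr (- (real n - 1)) * ((2*(g * (2 * s) powr (1/2)))^n * (2 * s - 0))
     = (c * (2*g)^n * 2 powr (real n/2) * 2) * s powr (real n/2 + 1 - b * (real n - 1))"
proof -
  have 1: "(s powr b) powr (- (real n - 1)) = s powr (- (b * (real n - 1)))"
  proof -
    have "b * (- (real n - 1)) = - (b * (real n - 1))" by (simp add: algebra_simps)
    then show ?thesis by (simp only: powr_powr)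
  qed
  have 2: "(2 * s) powr (real n/2) = 2 powr (real n/2) * s powr (real n/2)" using assms by (simp add: powr_mult)
  have 3: "s powr (real n/2 + 1 - b * (real n - 1)) = s powr (- (b * (real n - 1))) * s powr (real n/2) * s"
  proof -
    have "real n/2 + 1 - b * (real n - 1) = - (b * (real n - 1)) + real n/2 + 1" by simp
    then show ?thesis using assms by (simp only: powr_add powr_one)
  qed
  have Q: "(2*(g * (2 * s) powr (1/2)))^n = (2*g)^n * (2 * s) powr (real n/2)" by (rule Qf) (use assms in simp)
  show ?thesis unfolding Q 1 2 3 by (simp add: mult_ac)
qed

lemma F2:
  assumes "0 < (s::real)" "0 < g"
  shows "c * (g * s powr a / 2) powr (- (real n - 1)) * ((2*(g * (2 * s) powr (1/2)))^n * ((s + s powr b) - (s - s powr b)))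
     = (c * (g/2) powr (- (real n - 1)) * (2*g)^n * 2 powr (real n/2) * 2) * s powr (real n/2 + b - a * (real n - 1))"
proof -
  have 1: "(g * s powr a / 2) powr (- (real n - 1)) = (g/2) powr (- (real n - 1)) * s powr (- (a * (real n - 1)))"
  proof -
    have "g * s powr a / 2 = (g/2) * s powr a" by simp
    then have "(g * s powr a / 2) powr (- (real n - 1)) = (g/2) powr (- (real n - 1)) * (s powr a) powr (- (real n - 1))"
      using assms by (simp only: powr_mult)
    moreover have "(s powr a) powr (- (real n - 1)) = s powr (- (a * (real n - 1)))"
    proof -
      have "a * (- (real n - 1)) = - (a * (real n - 1))" by (simp add: algebra_simps)
      then show ?thesis by (simp only: powr_powr)
    qed
    ultimately show ?thesis by simp
  qed
  have 2: "(2 * s) powr (real n/2) = 2 powr (real n/2) * s powr (real n/2)" using assms by (simp add: powr_mult)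
  have 3: "s powr (real n/2 + b - a * (real n - 1)) = s powr (- (a * (real n - 1))) * s powr (real n/2) * s powr b"
  proof -
    have "real n/2 + b - a * (real n - 1) = - (a * (real n - 1)) + real n/2 + b" by simp
    then show ?thesis using assms by (simp only: powr_add)
  qed
  have 4: "(s + s powr b) - (s - s powr b) = 2 * s powr b" by simp
  have Q: "(2*(g * (2 * s) powr (1/2)))^n = (2*g)^n * (2 * s) powr (real n/2)" by (rule Qf) (use assms in simp)
  show ?thesis unfolding Q 1 2 3 4 by (simp add: mult_ac)
qed

lemma F4:
  assumes "0 < (k::real)"
  shows "c * (k/4) powr (- (real n - 1)) * ((2*(g * k powr (1/2)))^n * (k - 0))
     = (c * 4 powr (real n - 1) * (2*g)^n) * k powr (real n/2 + 1 - (real n - 1))"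
proof -
  have 1: "(k/4) powr (- (real n - 1)) = k powr (- (real n - 1)) * 4 powr (real n - 1)"
  proof -
    have "(k/4) powr (- (real n - 1)) = k powr (- (real n - 1)) / 4 powr (- (real n - 1))" using assms by (intro powr_divide)
    also have "4 powr (- (real n - 1)) = inverse (4 powr (real n - 1))" by (rule powr_minus)
    finally show ?thesis by (simp only: divide_inverse inverse_inverse_eq)
  qed
  have 3: "k powr (real n/2 + 1 - (real n - 1)) = k powr (- (real n - 1)) * k powr (real n/2) * k"
  proof -
    have "real n/2 + 1 - (real n - 1) = - (real n - 1) + real n/2 + 1" by simp
    then show ?thesis using assms by (simp only: powr_add powr_one)
  qed
  have Q: "(2*(g * k powr (1/2)))^n = (2*g)^n * k powr (real n/2)" by (rule Qf) (use assms in simp)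
  show ?thesis unfolding Q 1 3 by (simp add: mult_ac)
qed

lemma neg_mono:
  fixes k s e C :: real
  assumes "0 < k" "k \<le> s" "e \<le> 0" "0 \<le> C"
  shows "C * s powr e \<le> C * k powr e"
proof -
  have "s powr e \<le> k powr e" by (rule powr_mono2') (use assms in auto)
  then show ?thesis using assms(4) by (rule mult_left_mono)
qed

lemma lim_pow:
  assumes "e < 0"
  shows "((\<lambda>k::real. C * k powr e) \<longlongrightarrow> 0) at_top"
proof -
  have "((\<lambda>k::real. k powr e) \<longlongrightarrow> 0) at_top" using assms by (intro tendsto_neg_powr filterlim_ident)
  then have "((\<lambda>k::real. C * k powr e) \<longlongrightarrow> C * 0) at_top" by (intro tendsto_mult tendsto_const)
  then show ?thesis by simp
qed

lemma lim_pow2: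
  assumes "e < 0"
  shows "((\<lambda>k::real. C * (2 * k) powr e) \<longlongrightarrow> 0) at_top"
proof -
  have f: "filterlim (\<lambda>k::real. 2 * k) at_top at_top"
    by (rule filterlim_tendsto_pos_mult_at_top[OF tendsto_const]) (auto intro: filterlim_ident)
  have "((\<lambda>k::real. (2 * k) powr e) \<longlongrightarrow> 0) at_top" using assms by (intro tendsto_neg_powr f)
  then have "((\<lambda>k::real. C * (2 * k) powr e) \<longlongrightarrow> C * 0) at_top" by (intro tendsto_mult tendsto_const)
  then show ?thesis by simp
qed

lemma sandw:
  fixes f :: "real \<Rightarrow> ennreal"
  assumes "eventually (\<lambda>k. f k \<le> ennreal (h k)) at_top" "(h \<longlongrightarrow> 0) at_top"
  shows "(f \<longlongrightarrow> 0) at_top"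
proof (rule tendsto_sandwich[of "\<lambda>_. 0" f at_top "\<lambda>k. ennreal (h k)"])
  show "\<forall>\<^sub>F n in at_top. 0 \<le> f n" by simp
  show "\<forall>\<^sub>F n in at_top. f n \<le> ennreal (h n)" by (rule assms(1))
  show "((\<lambda>_. 0) \<longlongrightarrow> (0::ennreal)) at_top" by simp
  have "((\<lambda>k. ennreal (h k)) \<longlongrightarrow> ennreal 0) at_top" using assms(2) by (rule tendsto_ennrealI)
  then show "((\<lambda>k. ennreal (h k)) \<longlongrightarrow> 0) at_top" by simp
qed

theorem mainTheorem13:
  fixes \<gamma> \<mu> :: real
  assumes "CARD('m::finite) \<ge> 5"
    and "\<gamma> > 0"
    and "\<mu> > 25/72"
  defines "P \<equiv> {y :: (real^'m) \<times> real. snd y > 0 \<and> norm (fst y) < \<gamma> * snd y powr (1/2)}"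
    and "P\<mu> \<equiv> {y :: (real^'m) \<times> real. snd y > 0 \<and> norm (fst y) < \<gamma> * snd y powr (1/2 + \<mu>)}"
  shows "((\<lambda>k::real. SUP x \<in> (- P\<mu>) \<inter> {x. snd x > k}. newton_pot P x) \<longlongrightarrow> 0) at_top \<and>
         ((\<lambda>k::real. SUP x \<in> (- ball 0 k) \<inter> {x. snd x \<le> k/2}. newton_pot P x) \<longlongrightarrow> 0) at_top"
proof -
  define n where "n = CARD('m)"
  define c where "c = \<bar>newton_alpha TYPE((real^'m)\<times>real)\<bar>"
  define q :: real where "q = 2 powr (real n/2 + 1 - (real n - 1))"
  define e0 where "e0 = real n/2 + 1 - (real n - 1)"
  define Ct where "Ct = c * (2*\<gamma>)^n * 2 powr (real n - 1) * 2 powr (real n/2) / (1 - q)"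
  have n5: "5 \<le> real n" using assms(1) unfolding n_def by simp
  have c0: "0 \<le> c" unfolding c_def by simp
  have q1: "q < 1" unfolding q_def using n5 by (intro powr_less_one) auto
  have Ct0: "0 \<le> Ct" unfolding Ct_def using c0 q1 assms(2) by simp
  have e0n: "e0 < 0" unfolding e0_def using n5 by simp
  have TB: "c * (2*\<gamma>)^n * (K/2) powr (- (real n - 1)) * (2*K) powr (real n/2) * K / (1 - q) = Ct * K powr e0"
    if "0 < K" for K
    unfolding Ct_def e0_def q_def by (rule TB_eq[OF that])
  have TB0: "0 \<le> c * (2*\<gamma>)^n * (K/2) powr (- (real n - 1)) * (2*K) powr (real n/2) * K / (1 - q)" if "0 < K" for K
    unfolding TB[OF that] using Ct0 by simp
  define C4 where "C4 = c * 4 powr (real n - 1) * (2*\<gamma>)^n"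
  have C40: "0 \<le> C4" unfolding C4_def using c0 assms(2) by simp
  have lim2: "((\<lambda>k::real. SUP x \<in> (- ball 0 k) \<inter> {x. snd x \<le> k/2}. newton_pot P x) \<longlongrightarrow> 0) at_top"
  proof (rule sandw)
    show "((\<lambda>k. C4 * k powr e0 + Ct * k powr e0) \<longlongrightarrow> 0) at_top"
      using lim_pow[OF e0n, of C4] lim_pow[OF e0n, of Ct] by (rule tendsto_add_zero)
    show "eventually (\<lambda>k. (SUP x \<in> (- ball 0 k) \<inter> {x. snd x \<le> k/2}. newton_pot P x) \<le> ennreal (C4 * k powr e0 + Ct * k powr e0)) at_top"
      unfolding eventually_at_top_linorder
    proof (intro exI allI impI)
      fix k :: real assume k: "16*\<gamma>^2 + 1 \<le> k"
      have k0: "0 < k" using k by (smt (verit) zero_le_power2)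
      show "(SUP x \<in> (- ball 0 k) \<inter> {x. snd x \<le> k/2}. newton_pot P x) \<le> ennreal (C4 * k powr e0 + Ct * k powr e0)"
      proof (rule SUP_least)
        fix x :: "(real^'m) \<times> real" assume x: "x \<in> (- ball 0 k) \<inter> {x. snd x \<le> k/2}"
        then have xn: "k \<le> norm x" and xs: "snd x \<le> k/2" by (auto simp: dist_norm)
        have "newton_pot P x \<le> ennreal (c * (k/4) powr (- (real n - 1)) * ((2*(\<gamma> * k powr (1/2)))^n * (k - 0)))
          + ennreal (c * (2*\<gamma>)^n * (k/2) powr (- (real n - 1)) * (2*k) powr (real n/2) * k / (1 - q))"
          unfolding P_def c_def n_def q_def by (rule part2) (use assms(1,2) k k0 xn xs in auto)
        also have "\<dots> = ennreal (C4 * k powr e0) + ennreal (Ct * k powr e0)"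
          unfolding TB[OF k0] F4[OF k0] C4_def e0_def by simp
        also have "\<dots> = ennreal (C4 * k powr e0 + Ct * k powr e0)"
          using C40 Ct0 by simp
        finally show "newton_pot P x \<le> ennreal (C4 * k powr e0 + Ct * k powr e0)" .
      qed
    qed
  qed
  define a where "a = 1/2 + \<mu>"
  define b :: real where "b = 22/25"
  define eA where "eA = real n/2 + 1 - b * (real n - 1)"
  define eW where "eW = real n/2 + b - a * (real n - 1)"
  define C1 where "C1 = c * (2*\<gamma>)^n * 2 powr (real n/2) * 2"
  define C2 where "C2 = c * (\<gamma>/2) powr (- (real n - 1)) * (2*\<gamma>)^n * 2 powr (real n/2) * 2"
  define S0 where "S0 = max 1 (4 powr (1/(a - 1/2)))"
  have a12: "a - 1/2 > 0" unfolding a_def using assms(3) by simp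
  have C10: "0 \<le> C1" unfolding C1_def using c0 assms(2) by simp
  have C20: "0 \<le> C2" unfolding C2_def using c0 assms(2) by simp
  have eAn: "eA < 0" unfolding eA_def b_def using n5 by simp
  have eWn: "eW < 0"
  proof -
    have "61/72 * (real n - 1) < a * (real n - 1)" unfolding a_def using assms(3) n5
      by (intro mult_strict_right_mono) auto
    moreover have "61/72 * (real n - 1) = 61/72 * real n - 61/72" by (simp only: right_diff_distrib mult_1_right)
    ultimately show ?thesis unfolding eW_def b_def using n5 by linarith
  qed
  have cond: "1 \<le> s \<and> s powr b \<le> s \<and> 2 * (2 * s) powr (1/2) \<le> s powr a" if s: "S0 \<le> s" for s
  proof -
    have s1: "1 \<le> s" using s unfolding S0_def by simp
    have "s powr b \<le> s powr 1" using s1 unfolding b_def by (intro powr_mono) auto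
    then have sb: "s powr b \<le> s" using s1 by simp
    have "(4 powr (1/(a - 1/2))) powr (a - 1/2) \<le> s powr (a - 1/2)"
      using s a12 unfolding S0_def by (intro powr_mono2) auto
    moreover have "(4 powr (1/(a - 1/2))) powr (a - 1/2) = 4"
      using a12 by (simp add: powr_powr)
    ultimately have s4: "4 \<le> s powr (a - 1/2)" by simp
    have "(2 * s) powr (1/2) = 2 powr (1/2) * s powr (1/2)" using s1 by (intro powr_mult)
    also have "2 powr (1/2) \<le> (2::real)"
    proof -
      have "sqrt 2 \<le> (2::real)" by (rule real_le_lsqrt) auto
      then show ?thesis by (simp add: powr_half_sqrt)
    qed
    then have "2 powr (1/2) * s powr (1/2) \<le> 2 * s powr (1/2)" by (intro mult_right_mono) auto
    finally have h1: "2 * (2 * s) powr (1/2) \<le> 4 * s powr (1/2)" by simp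
    have "4 * s powr (1/2) \<le> s powr (a - 1/2) * s powr (1/2)" using s4 by (intro mult_right_mono) auto
    also have "s powr (a - 1/2) * s powr (1/2) = s powr a" using s1 by (simp add: powr_add[symmetric])
    finally show ?thesis using s1 sb h1 by simp
  qed
  define Phi where "Phi = (\<lambda>s. C1 * s powr eA + C2 * s powr eW + Ct * (2 * s) powr e0)"
  have lim1: "((\<lambda>k::real. SUP x \<in> (- P\<mu>) \<inter> {x. snd x > k}. newton_pot P x) \<longlongrightarrow> 0) at_top"
  proof (rule sandw)
    show "(Phi \<longlongrightarrow> 0) at_top" unfolding Phi_def
      by (intro tendsto_add_zero lim_pow lim_pow2 eAn eWn e0n)
    show "eventually (\<lambda>k. (SUP x \<in> (- P\<mu>) \<inter> {x. snd x > k}. newton_pot P x) \<le> ennreal (Phi k)) at_top"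
      unfolding eventually_at_top_linorder
    proof (intro exI allI impI)
      fix k :: real assume k: "S0 \<le> k"
      have k1: "1 \<le> k" using k unfolding S0_def by simp
      show "(SUP x \<in> (- P\<mu>) \<inter> {x. snd x > k}. newton_pot P x) \<le> ennreal (Phi k)"
      proof (rule SUP_least)
        fix x :: "(real^'m) \<times> real" assume x: "x \<in> (- P\<mu>) \<inter> {x. snd x > k}"
        define s where "s = snd x"
        have sk: "k < s" using x unfolding s_def by simp
        have s0: "0 < s" using sk k1 by simp
        have cs: "1 \<le> s \<and> s powr b \<le> s \<and> 2 * (2 * s) powr (1/2) \<le> s powr a" using cond k sk by simp
        have T3: "c * (2*\<gamma>)^n * ((2 * s)/2) powr (- (real n - 1)) * (2*(2 * s)) powr (real n/2) * (2 * s) / (1 - q) = Ct * (2 * s) powr e0"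
          by (rule TB) (use s0 in simp)
        have xf: "\<gamma> * s powr a \<le> norm (fst x)" using x s0 unfolding P\<mu>_def s_def a_def by auto
        have "newton_pot P x \<le> ennreal (c * (s powr b) powr (- (real n - 1)) * ((2*(\<gamma> * (2 * s) powr (1/2)))^n * (2 * s - 0)))
          + ennreal (c * (\<gamma> * s powr a / 2) powr (- (real n - 1)) * ((2*(\<gamma> * (2 * s) powr (1/2)))^n * ((s + s powr b) - (s - s powr b))))
          + ennreal (c * (2*\<gamma>)^n * ((2 * s)/2) powr (- (real n - 1)) * (2*(2 * s)) powr (real n/2) * (2 * s) / (1 - q))"
          unfolding P_def c_def n_def q_def by (rule part1) (use assms(1,2) cs xf s_def in auto)
        also have "\<dots> = ennreal (C1 * s powr eA) + ennreal (C2 * s powr eW) + ennreal (Ct * (2 * s) powr e0)"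
          using s0 unfolding T3 F1[OF s0] F2[OF s0 assms(2)] C1_def C2_def eA_def eW_def using s0 by simp
        also have "\<dots> = ennreal (Phi s)" unfolding Phi_def using C10 C20 Ct0 by simp
        also have "Phi s \<le> Phi k" unfolding Phi_def
          using neg_mono[of k s eA C1] neg_mono[of k s eW C2] neg_mono[of "2*k" "2 * s" e0 Ct] eAn eWn e0n C10 C20 Ct0 k1 sk
          by (intro add_mono) auto
        then have "ennreal (Phi s) \<le> ennreal (Phi k)" by (rule ennreal_leI)
        finally show "newton_pot P x \<le> ennreal (Phi k)" .
      qed
    qed
  qed
  show ?thesis using lim1 lim2 by simp
qed
end
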